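(* For every small model $M\preceq\mathbb{C}$ and every full $C\supseteq M$, every $M$-f.s. sequence $\langle A_i:i\in I\rangle$ over $C$ is an order-congruence over $C$.
   Context: Work in a monster model $\mathbb{C}$ of an arbitrary complete theory. For $B\supseteq M$, $\mathrm{tp}(A/B)$ is finitely satisfied in $M$ if each of its formulas is satisfied by a tuple from $M$. $C\supseteq M$ is full if every type in $S_n(M)$, for every $n$, is realized in $C$. $A_{<i}=\bigcup_{j<i}A_j$. An $M$-f.s. sequence over $C$ is a sequence of sets $\langle A_i:i\in I\rangle$ with $\mathrm{tp}(A_i/A_{<i}C)$ finitely satisfied in $M$ for every $i$. It is an order-congruence over $C$ if for every $i^*\in I$, all $i^*\le i_1<\dots<i_n$ and $i^*\le j_1<\dots<j_n$ in $I$, and all finite tuples $\bar a_k$ from $A_{i_k}$, $\bar b_k$ from $A_{j_k}$ with $\mathrm{tp}(\bar a_k/C)=\mathrm{tp}(\bar b_k/C)$ ($k=1,\dots,n$), we have $\mathrm{tp}(\bar a_1\dots\bar a_n/CA_{<i^*})=\mathrm{tp}(\bar b_1\dots\bar b_n/CA_{<i^*})$. *)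

theory Defs
  imports Main
begin

text \<open>Terms and formulas of a first-order language with function symbols 'f and
relation symbols 'r, with variables indexed by nat and with parameters (constants
naming elements of the monster model, of type 'a).\<close>

datatype ('f, 'a) trm = Var nat | Par 'a | Fn 'f "('f, 'a) trm list"

datatype ('f, 'r, 'a) fml =
    Eq "('f, 'a) trm" "('f, 'a) trm"
  | Rel 'r "('f, 'a) trm list"
  | Neg "('f, 'r, 'a) fml"
  | Conj "('f, 'r, 'a) fml" "('f, 'r, 'a) fml"
  | Ex nat "('f, 'r, 'a) fml"

fun tval :: "('f \<Rightarrow> 'a list \<Rightarrow> 'a) \<Rightarrow> (nat \<Rightarrow> 'a) \<Rightarrow> ('f, 'a) trm \<Rightarrow> 'a" where
  "tval F e (Var n) = e n"
| "tval F e (Par a) = a"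
| "tval F e (Fn f ts) = F f (map (tval F e) ts)"

fun tfv :: "('f, 'a) trm \<Rightarrow> nat set" where
  "tfv (Var n) = {n}"
| "tfv (Par a) = {}"
| "tfv (Fn f ts) = \<Union> (set (map tfv ts))"

fun tpar :: "('f, 'a) trm \<Rightarrow> 'a set" where
  "tpar (Var n) = {}"
| "tpar (Par a) = {a}"
| "tpar (Fn f ts) = \<Union> (set (map tpar ts))"

fun fv :: "('f, 'r, 'a) fml \<Rightarrow> nat set" where
  "fv (Eq s t) = tfv s \<union> tfv t"
| "fv (Rel r ts) = \<Union> (set (map tfv ts))"
| "fv (Neg \<phi>) = fv \<phi>"
| "fv (Conj \<phi> \<psi>) = fv \<phi> \<union> fv \<psi>"
| "fv (Ex x \<phi>) = fv \<phi> - {x}"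

fun params :: "('f, 'r, 'a) fml \<Rightarrow> 'a set" where
  "params (Eq s t) = tpar s \<union> tpar t"
| "params (Rel r ts) = \<Union> (set (map tpar ts))"
| "params (Neg \<phi>) = params \<phi>"
| "params (Conj \<phi> \<psi>) = params \<phi> \<union> params \<psi>"
| "params (Ex x \<phi>) = params \<phi>"

fun sat :: "'a set \<Rightarrow> ('f \<Rightarrow> 'a list \<Rightarrow> 'a) \<Rightarrow> ('r \<Rightarrow> 'a list \<Rightarrow> bool)
            \<Rightarrow> ('f, 'r, 'a) fml \<Rightarrow> (nat \<Rightarrow> 'a) \<Rightarrow> bool" where
  "sat D F R (Eq s t) e = (tval F e s = tval F e t)"
| "sat D F R (Rel r ts) e = R r (map (tval F e) ts)"
| "sat D F R (Neg \<phi>) e = (\<not> sat D F R \<phi> e)"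
| "sat D F R (Conj \<phi> \<psi>) e = (sat D F R \<phi> e \<and> sat D F R \<psi> e)"
| "sat D F R (Ex x \<phi>) e = (\<exists>d\<in>D. sat D F R \<phi> (e(x := d)))"

definition is_structure :: "'a set \<Rightarrow> ('f \<Rightarrow> 'a list \<Rightarrow> 'a) \<Rightarrow> bool" where
  "is_structure D F \<longleftrightarrow> D \<noteq> {} \<and> (\<forall>f xs. set xs \<subseteq> D \<longrightarrow> F f xs \<in> D)"

definition fmls_over :: "'a set \<Rightarrow> nat \<Rightarrow> ('f, 'r, 'a) fml set" where
  "fmls_over B n = {\<phi>. params \<phi> \<subseteq> B \<and> fv \<phi> \<subseteq> {..<n}}"

definition holds :: "'a set \<Rightarrow> ('f \<Rightarrow> 'a list \<Rightarrow> 'a) \<Rightarrow> ('r \<Rightarrow> 'a list \<Rightarrow> bool)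
                     \<Rightarrow> ('f, 'r, 'a) fml \<Rightarrow> 'a list \<Rightarrow> bool" where
  "holds D F R \<phi> as \<longleftrightarrow> sat D F R \<phi> (\<lambda>i. as ! i)"

definition tp :: "'a set \<Rightarrow> ('f \<Rightarrow> 'a list \<Rightarrow> 'a) \<Rightarrow> ('r \<Rightarrow> 'a list \<Rightarrow> bool)
                  \<Rightarrow> 'a list \<Rightarrow> 'a set \<Rightarrow> ('f, 'r, 'a) fml set" where
  "tp D F R as B = {\<phi> \<in> fmls_over B (length as). holds D F R \<phi> as}"

definition elem_sub :: "'a set \<Rightarrow> 'a set \<Rightarrow> ('f \<Rightarrow> 'a list \<Rightarrow> 'a) \<Rightarrow> ('r \<Rightarrow> 'a list \<Rightarrow> bool) \<Rightarrow> bool" where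
  "elem_sub M D F R \<longleftrightarrow> M \<subseteq> D \<and> is_structure M F \<and>
     (\<forall>\<phi> e. params \<phi> \<subseteq> M \<longrightarrow> (\<forall>n. e n \<in> M) \<longrightarrow> (sat M F R \<phi> e \<longleftrightarrow> sat D F R \<phi> e))"

definition fin_sat_in_monster :: "'a set \<Rightarrow> ('f \<Rightarrow> 'a list \<Rightarrow> 'a) \<Rightarrow> ('r \<Rightarrow> 'a list \<Rightarrow> bool)
                  \<Rightarrow> nat \<Rightarrow> ('f, 'r, 'a) fml set \<Rightarrow> bool" where
  "fin_sat_in_monster D F R n p \<longleftrightarrow>
     (\<forall>Q. Q \<subseteq> p \<longrightarrow> finite Q \<longrightarrow>
        (\<exists>ds. length ds = n \<and> set ds \<subseteq> D \<and> (\<forall>\<phi>\<in>Q. holds D F R \<phi> ds)))"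

text \<open>The monster model is kappa-saturated, where kappa is the cardinality of the set K:
every finitely satisfiable set of formulas over a parameter set of size < kappa is realized.\<close>
definition saturated :: "'a set \<Rightarrow> ('f \<Rightarrow> 'a list \<Rightarrow> 'a) \<Rightarrow> ('r \<Rightarrow> 'a list \<Rightarrow> bool) \<Rightarrow> 'k set \<Rightarrow> bool" where
  "saturated D F R K \<longleftrightarrow>
     (\<forall>B n p. B \<subseteq> D \<longrightarrow> (card_of B, card_of K) \<in> ordLess \<longrightarrow> p \<subseteq> fmls_over B n \<longrightarrow>
        fin_sat_in_monster D F R n p \<longrightarrow>
        (\<exists>ds. length ds = n \<and> set ds \<subseteq> D \<and> (\<forall>\<phi>\<in>p. holds D F R \<phi> ds)))"

definition Sn :: "'a set \<Rightarrow> ('f \<Rightarrow> 'a list \<Rightarrow> 'a) \<Rightarrow> ('r \<Rightarrow> 'a list \<Rightarrow> bool)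
                  \<Rightarrow> 'a set \<Rightarrow> nat \<Rightarrow> ('f, 'r, 'a) fml set set" where
  "Sn D F R M n = {p. p \<subseteq> fmls_over M n \<and>
       (\<forall>\<phi>\<in>fmls_over M n. \<phi> \<in> p \<or> Neg \<phi> \<in> p) \<and> fin_sat_in_monster D F R n p}"

definition full :: "'a set \<Rightarrow> ('f \<Rightarrow> 'a list \<Rightarrow> 'a) \<Rightarrow> ('r \<Rightarrow> 'a list \<Rightarrow> bool)
                    \<Rightarrow> 'a set \<Rightarrow> 'a set \<Rightarrow> bool" where
  "full D F R M C \<longleftrightarrow>
     (\<forall>n p. p \<in> Sn D F R M n \<longrightarrow> (\<exists>cs. length cs = n \<and> set cs \<subseteq> C \<and> p \<subseteq> tp D F R cs M))"

text \<open>tp(A/B) is finitely satisfied in M: every formula of tp(A/B) (which mentions only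
finitely many elements of A, listed as a tuple as) is satisfied by a tuple from M.\<close>
definition fin_sat_in :: "'a set \<Rightarrow> ('f \<Rightarrow> 'a list \<Rightarrow> 'a) \<Rightarrow> ('r \<Rightarrow> 'a list \<Rightarrow> bool)
                          \<Rightarrow> 'a set \<Rightarrow> 'a set \<Rightarrow> 'a set \<Rightarrow> bool" where
  "fin_sat_in D F R A B M \<longleftrightarrow>
     (\<forall>as. set as \<subseteq> A \<longrightarrow> (\<forall>\<phi>\<in>tp D F R as B.
        \<exists>ms. length ms = length as \<and> set ms \<subseteq> M \<and> holds D F R \<phi> ms))"

definition below :: "('i::linorder \<Rightarrow> 'a set) \<Rightarrow> 'i \<Rightarrow> 'a set" where
  "below A i = (\<Union>j\<in>{j. j < i}. A j)"

definition fs_sequence :: "'a set \<Rightarrow> ('f \<Rightarrow> 'a list \<Rightarrow> 'a) \<Rightarrow> ('r \<Rightarrow> 'a list \<Rightarrow> bool)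
                           \<Rightarrow> 'a set \<Rightarrow> 'a set \<Rightarrow> ('i::linorder \<Rightarrow> 'a set) \<Rightarrow> bool" where
  "fs_sequence D F R M C A \<longleftrightarrow> (\<forall>i. fin_sat_in D F R (A i) (below A i \<union> C) M)"

definition order_congruence :: "'a set \<Rightarrow> ('f \<Rightarrow> 'a list \<Rightarrow> 'a) \<Rightarrow> ('r \<Rightarrow> 'a list \<Rightarrow> bool)
                           \<Rightarrow> 'a set \<Rightarrow> ('i::linorder \<Rightarrow> 'a set) \<Rightarrow> bool" where
  "order_congruence D F R C A \<longleftrightarrow>
     (\<forall>istar is js aa bb.
        sorted_wrt (<) is \<and> sorted_wrt (<) js \<and>
        length js = length is \<and> length aa = length is \<and> length bb = length is \<and>
        (\<forall>i\<in>set is. istar \<le> i) \<and> (\<forall>j\<in>set js. istar \<le> j) \<and>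
        (\<forall>k<length is. set (aa ! k) \<subseteq> A (is ! k) \<and> set (bb ! k) \<subseteq> A (js ! k) \<and>
                        tp D F R (aa ! k) C = tp D F R (bb ! k) C)
        \<longrightarrow> tp D F R (concat aa) (C \<union> below A istar) = tp D F R (concat bb) (C \<union> below A istar))"

end

theory Submission
  imports Defs
begin


lemma tval_cong: "(\<forall>n\<in>tfv t. e1 n = e2 n) \<Longrightarrow> tval F e1 t = tval F e2 t"
proof (induction t)
  case (Fn f ts)
  have "map (tval F e1) ts = map (tval F e2) ts"
  proof (rule map_cong[OF refl])
    fix x assume x: "x \<in> set ts"
    then have "\<forall>n\<in>tfv x. e1 n = e2 n" using Fn.prems by auto
    then show "tval F e1 x = tval F e2 x" using Fn.IH x by blast
  qed
  then show ?case by (simp only: tval.simps)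
qed auto

lemma sat_cong: "(\<forall>n\<in>fv \<phi>. e1 n = e2 n) \<Longrightarrow> sat D F R \<phi> e1 = sat D F R \<phi> e2"
proof (induction \<phi> arbitrary: e1 e2)
  case (Eq s t) then show ?case using tval_cong[of s e1 e2 F] tval_cong[of t e1 e2 F] by auto
next
  case (Rel r ts)
  then have "map (tval F e1) ts = map (tval F e2) ts" by (intro map_cong refl tval_cong) auto
  then show ?case by (simp only: sat.simps)
next
  case (Ex x \<phi>)
  have "\<And>d. sat D F R \<phi> (e1(x:=d)) = sat D F R \<phi> (e2(x:=d))"
    using Ex.prems by (intro Ex.IH) auto
  then show ?case by simp
next
  case (Conj \<phi>1 \<phi>2)
  have "sat D F R \<phi>1 e1 = sat D F R \<phi>1 e2" using Conj.prems by (intro Conj.IH(1)) auto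
  moreover have "sat D F R \<phi>2 e1 = sat D F R \<phi>2 e2" using Conj.prems by (intro Conj.IH(2)) auto
  ultimately show ?case by simp
qed auto

fun tpsub :: "(nat \<Rightarrow> 'a option) \<Rightarrow> ('f,'a) trm \<Rightarrow> ('f,'a) trm" where
  "tpsub s (Var n) = (case s n of Some a \<Rightarrow> Par a | None \<Rightarrow> Var n)"
| "tpsub s (Par a) = Par a"
| "tpsub s (Fn f ts) = Fn f (map (tpsub s) ts)"

fun psub :: "(nat \<Rightarrow> 'a option) \<Rightarrow> ('f,'r,'a) fml \<Rightarrow> ('f,'r,'a) fml" where
  "psub s (Eq t u) = Eq (tpsub s t) (tpsub s u)"
| "psub s (Rel r ts) = Rel r (map (tpsub s) ts)"
| "psub s (Neg \<phi>) = Neg (psub s \<phi>)"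
| "psub s (Conj \<phi> \<psi>) = Conj (psub s \<phi>) (psub s \<psi>)"
| "psub s (Ex x \<phi>) = Ex x (psub (s(x:=None)) \<phi>)"

definition mrg :: "(nat \<Rightarrow> 'a option) \<Rightarrow> (nat \<Rightarrow> 'a) \<Rightarrow> nat \<Rightarrow> 'a" where
  "mrg s e i = (case s i of Some a \<Rightarrow> a | None \<Rightarrow> e i)"

lemma tval_tpsub: "tval F e (tpsub s t) = tval F (mrg s e) t"
proof (induction t)
  case (Fn f ts)
  have "map (tval F e \<circ> tpsub s) ts = map (tval F (mrg s e)) ts"
  proof (rule map_cong[OF refl])
    fix x assume "x \<in> set ts"
    then show "(tval F e \<circ> tpsub s) x = tval F (mrg s e) x" using Fn.IH by (simp only: comp_apply)
  qed
  then show ?case by (simp only: tval.simps tpsub.simps map_map)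
qed (auto simp: mrg_def split: option.split)

lemma sat_psub: "sat D F R (psub s \<phi>) e = sat D F R \<phi> (mrg s e)"
proof (induction \<phi> arbitrary: s e)
  case (Ex x \<phi>)
  have "\<And>d. mrg (s(x:=None)) (e(x:=d)) = (mrg s e)(x:=d)"
    by (auto simp: mrg_def fun_eq_iff split: option.split)
  then show ?case using Ex.IH[of "s(x:=None)"] by (simp only: sat.simps psub.simps)
qed (auto simp: tval_tpsub comp_def)

lemma tfv_tpsub: "tfv (tpsub s t) = {n\<in>tfv t. s n = None}"
  by (induction t) (auto split: option.split)

lemma fv_psub: "fv (psub s \<phi>) = {n\<in>fv \<phi>. s n = None}"
  by (induction \<phi> arbitrary: s) (auto simp: tfv_tpsub)

lemma tpar_tpsub: "tpar (tpsub s t) \<subseteq> tpar t \<union> {a. \<exists>n\<in>tfv t. s n = Some a}"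
proof (induction t)
  case (Fn f ts) then show ?case by force
qed (auto split: option.split)

lemma params_psub: "params (psub s \<phi>) \<subseteq> params \<phi> \<union> {a. \<exists>n\<in>fv \<phi>. s n = Some a}"
proof (induction \<phi> arbitrary: s)
  case (Eq t u) then show ?case using tpar_tpsub[of s t] tpar_tpsub[of s u] by auto
next
  case (Rel r ts) then show ?case using tpar_tpsub[of s] by fastforce
next
  case (Ex x \<phi>)
  have "params (psub (s(x:=None)) \<phi>) \<subseteq> params \<phi> \<union> {a. \<exists>n\<in>fv \<phi>. (s(x:=None)) n = Some a}"
    by (rule Ex.IH)
  also have "\<dots> \<subseteq> params (Ex x \<phi>) \<union> {a. \<exists>n\<in>fv (Ex x \<phi>). s n = Some a}"
    by auto
  finally show ?case by simp
next
  case (Conj \<phi>1 \<phi>2)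
  have "params (psub s \<phi>1) \<subseteq> params \<phi>1 \<union> {a. \<exists>n\<in>fv \<phi>1. s n = Some a}" by (rule Conj.IH(1))
  moreover have "params (psub s \<phi>2) \<subseteq> params \<phi>2 \<union> {a. \<exists>n\<in>fv \<phi>2. s n = Some a}" by (rule Conj.IH(2))
  ultimately show ?case by auto
qed auto

fun tren :: "(nat \<Rightarrow> nat) \<Rightarrow> ('f,'a) trm \<Rightarrow> ('f,'a) trm" where
  "tren p (Var n) = Var (p n)"
| "tren p (Par a) = Par a"
| "tren p (Fn f ts) = Fn f (map (tren p) ts)"

fun ren :: "(nat \<Rightarrow> nat) \<Rightarrow> ('f,'r,'a) fml \<Rightarrow> ('f,'r,'a) fml" where
  "ren p (Eq t u) = Eq (tren p t) (tren p u)"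
| "ren p (Rel r ts) = Rel r (map (tren p) ts)"
| "ren p (Neg \<phi>) = Neg (ren p \<phi>)"
| "ren p (Conj \<phi> \<psi>) = Conj (ren p \<phi>) (ren p \<psi>)"
| "ren p (Ex x \<phi>) = Ex (p x) (ren p \<phi>)"

lemma tval_tren: "tval F e (tren p t) = tval F (\<lambda>i. e (p i)) t"
proof (induction t)
  case (Fn f ts)
  have "map (tval F e \<circ> tren p) ts = map (tval F (\<lambda>i. e (p i))) ts"
  proof (rule map_cong[OF refl])
    fix x assume "x \<in> set ts"
    then show "(tval F e \<circ> tren p) x = tval F (\<lambda>i. e (p i)) x" using Fn.IH by (simp only: comp_apply)
  qed
  then show ?case by (simp only: tval.simps tren.simps map_map)
qed auto

lemma sat_ren: "inj p \<Longrightarrow> sat D F R (ren p \<phi>) e = sat D F R \<phi> (\<lambda>i. e (p i))"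
proof (induction \<phi> arbitrary: e)
  case (Ex x \<phi>)
  have "\<And>d. (\<lambda>i. (e(p x := d)) (p i)) = (\<lambda>i. e (p i))(x:=d)"
    using Ex.prems by (auto simp: fun_eq_iff inj_eq)
  then show ?case using Ex by simp
qed (auto simp: tval_tren comp_def)

lemma tfv_tren: "tfv (tren p t) = p ` tfv t"
  by (induction t) auto

lemma fv_ren: "fv (ren p \<phi>) \<subseteq> p ` fv \<phi>"
  by (induction \<phi>) (auto simp: tfv_tren)

lemma tpar_tren: "tpar (tren p t) = tpar t"
  by (induction t) auto

lemma params_ren: "params (ren p \<phi>) = params \<phi>"
  by (induction \<phi>) (auto simp: tpar_tren)

fun tpabs :: "('a \<Rightarrow> nat) \<Rightarrow> 'a set \<Rightarrow> ('f,'a) trm \<Rightarrow> ('f,'a) trm" where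
  "tpabs h P (Var n) = Var n"
| "tpabs h P (Par a) = (if a \<in> P then Var (h a) else Par a)"
| "tpabs h P (Fn f ts) = Fn f (map (tpabs h P) ts)"

fun pabs :: "('a \<Rightarrow> nat) \<Rightarrow> 'a set \<Rightarrow> ('f,'r,'a) fml \<Rightarrow> ('f,'r,'a) fml" where
  "pabs h P (Eq t u) = Eq (tpabs h P t) (tpabs h P u)"
| "pabs h P (Rel r ts) = Rel r (map (tpabs h P) ts)"
| "pabs h P (Neg \<phi>) = Neg (pabs h P \<phi>)"
| "pabs h P (Conj \<phi> \<psi>) = Conj (pabs h P \<phi>) (pabs h P \<psi>)"
| "pabs h P (Ex x \<phi>) = Ex x (pabs h P \<phi>)"

fun bvars :: "('f,'r,'a) fml \<Rightarrow> nat set" where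
  "bvars (Eq t u) = {}"
| "bvars (Rel r ts) = {}"
| "bvars (Neg \<phi>) = bvars \<phi>"
| "bvars (Conj \<phi> \<psi>) = bvars \<phi> \<union> bvars \<psi>"
| "bvars (Ex x \<phi>) = insert x (bvars \<phi>)"

lemma tval_tpabs: "\<forall>a\<in>P. e (h a) = a \<Longrightarrow> tval F e (tpabs h P t) = tval F e t"
proof (induction t)
  case (Fn f ts)
  have "map (tval F e \<circ> tpabs h P) ts = map (tval F e) ts"
  proof (rule map_cong[OF refl])
    fix x assume "x \<in> set ts"
    then show "(tval F e \<circ> tpabs h P) x = tval F e x" using Fn by (simp only: comp_apply)
  qed
  then show ?case by (simp only: tval.simps tpabs.simps map_map)
qed auto

lemma sat_pabs: "\<forall>a\<in>P. e (h a) = a \<Longrightarrow> \<forall>a\<in>P. h a \<notin> bvars \<phi> \<Longrightarrow>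
   sat D F R (pabs h P \<phi>) e = sat D F R \<phi> e"
proof (induction \<phi> arbitrary: e)
  case (Ex x \<phi>)
  have "\<And>d. sat D F R (pabs h P \<phi>) (e(x:=d)) = sat D F R \<phi> (e(x:=d))"
    using Ex.prems by (intro Ex.IH) auto
  then show ?case by simp
qed (auto simp: tval_tpabs comp_def)

lemma tpar_tpabs: "tpar (tpabs h P t) = tpar t - P"
  by (induction t) auto

lemma params_pabs: "params (pabs h P \<phi>) = params \<phi> - P"
  by (induction \<phi>) (auto simp: tpar_tpabs)

lemma finite_tfv: "finite (tfv t)"
  by (induction t) auto
lemma finite_fv: "finite (fv \<phi>)"
  by (induction \<phi>) (auto simp: finite_tfv)
lemma finite_tpar: "finite (tpar t)"
  by (induction t) auto
lemma finite_params: "finite (params \<phi>)"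
  by (induction \<phi>) (auto simp: finite_tpar)
lemma finite_bvars: "finite (bvars \<phi>)"
  by (induction \<phi>) auto




definition sig :: "nat \<Rightarrow> nat \<Rightarrow> nat \<Rightarrow> nat" where
  "sig p n k = (if k < p then k + n else if k < p + n then k - p else k)"

lemma inj_sig: "inj (sig p n)"
  by (auto simp: inj_def sig_def split: if_splits)

lemma shift_down:
  assumes "fv \<theta> \<subseteq> {p..<p+n}" "length xs = n" "\<forall>k\<in>{p..<p+n}. g k = xs ! (k - p)"
  shows "holds D F R (ren (sig p n) \<theta>) xs = sat D F R \<theta> g"
proof -
  have "holds D F R (ren (sig p n) \<theta>) xs = sat D F R \<theta> (\<lambda>i. xs ! sig p n i)"
    unfolding holds_def by (rule sat_ren[OF inj_sig])
  also have "\<dots> = sat D F R \<theta> g"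
    by (rule sat_cong) (use assms in \<open>auto simp: sig_def\<close>)
  finally show ?thesis .
qed

lemma fv_shift: "fv \<theta> \<subseteq> {p..<p+n} \<Longrightarrow> fv (ren (sig p n) \<theta>) \<subseteq> {..<n}"
  using fv_ren[of "sig p n" \<theta>] by (force simp: sig_def)

lemma holds_Neg: "holds D F R (Neg \<phi>) xs = (\<not> holds D F R \<phi> xs)"
  by (simp add: holds_def)

lemma fs_core:
  assumes fsi: "fin_sat_in D F R Ai B M"
    and a: "set a \<subseteq> Ai" and MB: "M \<subseteq> B" and pM: "params \<phi> \<subseteq> M"
    and g1a: "\<forall>k\<in>{p..<p+length a}. g1 k = a ! (k - p)"
    and g2a: "\<forall>k\<in>{p..<p+length a}. g2 k = a ! (k - p)"
    and g1B: "\<forall>k\<in>fv \<phi> - {p..<p+length a}. g1 k \<in> B"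
    and g2B: "\<forall>k\<in>fv \<phi> - {p..<p+length a}. g2 k \<in> B"
    and tyeq: "\<forall>\<psi>. params \<psi> \<subseteq> M \<longrightarrow> fv \<psi> \<subseteq> fv \<phi> - {p..<p+length a} \<longrightarrow>
                 (sat D F R \<psi> g1 = sat D F R \<psi> g2)"
    and s1: "sat D F R \<phi> g1" and s2: "\<not> sat D F R \<phi> g2"
  shows False
proof -
  define n where "n = length a"
  define I where "I = {p..<p+n}"
  define s1' where "s1' = (\<lambda>k. if k \<in> I then None else Some (g1 k))"
  define s2' where "s2' = (\<lambda>k. if k \<in> I then None else Some (g2 k))"
  define \<theta> where "\<theta> = Conj (psub s1' \<phi>) (Neg (psub s2' \<phi>))"
  have fv\<theta>: "fv \<theta> \<subseteq> I" by (auto simp: \<theta>_def fv_psub s1'_def s2'_def)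
  have p1: "params (psub s1' \<phi>) \<subseteq> B"
    using params_psub[of s1' \<phi>] pM MB g1B by (force simp: s1'_def I_def n_def split: if_splits)
  have p2: "params (psub s2' \<phi>) \<subseteq> B"
    using params_psub[of s2' \<phi>] pM MB g2B by (force simp: s2'_def I_def n_def split: if_splits)
  have par\<theta>: "params \<theta> \<subseteq> B" using p1 p2 by (simp add: \<theta>_def)
  have m1: "mrg s1' g1 = g1" by (auto simp: fun_eq_iff mrg_def s1'_def)
  have m2: "mrg s2' g1 = g2" using g1a g2a by (auto simp: fun_eq_iff mrg_def s2'_def I_def n_def)
  have st: "sat D F R \<theta> g1" using s1 s2 m1 m2 by (simp add: \<theta>_def sat_psub)
  define \<chi> where "\<chi> = ren (sig p n) \<theta>"
  have h\<chi>: "holds D F R \<chi> xs = sat D F R \<theta> g" if "length xs = n" "\<forall>k\<in>I. g k = xs!(k-p)" for xs g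
    unfolding \<chi>_def by (rule shift_down) (use that fv\<theta> in \<open>auto simp: I_def\<close>)
  have "holds D F R \<chi> a" using h\<chi>[of a g1] g1a st by (simp add: I_def n_def)
  moreover have "\<chi> \<in> fmls_over B (length a)"
    using fv_shift[of \<theta> p n] fv\<theta> par\<theta> by (simp add: fmls_over_def \<chi>_def params_ren I_def n_def)
  ultimately have "\<chi> \<in> tp D F R a B" by (simp add: tp_def)
  then obtain ms where ms: "length ms = length a" "set ms \<subseteq> M" "holds D F R \<chi> ms"
    using fsi a unfolding fin_sat_in_def by blast
  define gm where "gm = (\<lambda>k. if k \<in> I then ms!(k-p) else g1 k)"
  have "sat D F R \<theta> gm" using h\<chi>[of ms gm] ms by (simp add: gm_def n_def)
  hence A: "sat D F R \<phi> (mrg s1' gm)" and B: "\<not> sat D F R \<phi> (mrg s2' gm)"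
    by (simp_all add: \<theta>_def sat_psub)
  define sm where "sm = (\<lambda>k. if k \<in> I then Some (ms!(k-p)) else None)"
  define \<psi> where "\<psi> = psub sm \<phi>"
  have "params \<psi> \<subseteq> M"
  proof
    fix x assume "x \<in> params \<psi>"
    then have "x \<in> params \<phi> \<or> (\<exists>k\<in>fv \<phi>. sm k = Some x)" using params_psub[of sm \<phi>] by (auto simp: \<psi>_def)
    then show "x \<in> M"
    proof
      assume "\<exists>k\<in>fv \<phi>. sm k = Some x"
      then obtain k where "k \<in> I" "x = ms!(k-p)" by (auto simp: sm_def split: if_splits)
      then have "x \<in> set ms" using ms(1) by (auto simp: I_def n_def)
      then show "x \<in> M" using ms(2) by auto
    qed (use pM in auto)
  qed
  moreover have "fv \<psi> \<subseteq> fv \<phi> - {p..<p+length a}" by (auto simp: \<psi>_def fv_psub sm_def I_def n_def)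
  ultimately have eq: "sat D F R \<psi> g1 = sat D F R \<psi> g2" using tyeq by blast
  have "mrg sm g1 = mrg s1' gm" by (auto simp: fun_eq_iff mrg_def sm_def s1'_def gm_def)
  moreover have "mrg sm g2 = mrg s2' gm" by (auto simp: fun_eq_iff mrg_def sm_def s2'_def gm_def)
  ultimately show False using A B eq by (simp add: \<psi>_def sat_psub)
qed

lemma tp_core:
  assumes tpe: "tp D F R a C = tp D F R b C" and len: "length b = length a"
    and pC: "params \<phi> \<subseteq> C"
    and cC: "\<forall>k\<in>fv \<phi> - {p..<p+length a}. c k \<in> C"
  shows "sat D F R \<phi> (\<lambda>k. if k \<in> {p..<p+length a} then a!(k-p) else c k)
       = sat D F R \<phi> (\<lambda>k. if k \<in> {p..<p+length a} then b!(k-p) else c k)"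
proof -
  define n where "n = length a"
  define I where "I = {p..<p+n}"
  define s where "s = (\<lambda>k. if k \<in> I then None else Some (c k))"
  define \<theta> where "\<theta> = psub s \<phi>"
  have fv\<theta>: "fv \<theta> \<subseteq> I" by (auto simp: \<theta>_def fv_psub s_def)
  have par\<theta>: "params \<theta> \<subseteq> C"
    using params_psub[of s \<phi>] pC cC by (force simp: \<theta>_def s_def I_def n_def split: if_splits)
  define \<chi> where "\<chi> = ren (sig p n) \<theta>"
  have h\<chi>: "holds D F R \<chi> xs = sat D F R \<theta> g" if "length xs = n" "\<forall>k\<in>I. g k = xs!(k-p)" for xs g
    unfolding \<chi>_def by (rule shift_down) (use that fv\<theta> in \<open>auto simp: I_def\<close>)
  have fo: "\<chi> \<in> fmls_over C n"
    using fv_shift[of \<theta> p n] fv\<theta> par\<theta> by (simp add: fmls_over_def \<chi>_def params_ren I_def)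
  have ea: "sat D F R \<theta> (\<lambda>k. if k \<in> I then xs!(k-p) else c k)
          = sat D F R \<phi> (\<lambda>k. if k \<in> I then xs!(k-p) else c k)" for xs
  proof -
    have "mrg s (\<lambda>k. if k \<in> I then xs!(k-p) else c k) = (\<lambda>k. if k \<in> I then xs!(k-p) else c k)"
      by (auto simp: fun_eq_iff mrg_def s_def)
    then show ?thesis by (simp add: \<theta>_def sat_psub)
  qed
  have "holds D F R \<chi> a = holds D F R \<chi> b"
    using tpe fo len by (auto simp: tp_def set_eq_iff n_def)
  moreover have "holds D F R \<chi> a = sat D F R \<theta> (\<lambda>k. if k \<in> I then a!(k-p) else c k)"
    by (rule h\<chi>) (auto simp: n_def)
  moreover have "holds D F R \<chi> b = sat D F R \<theta> (\<lambda>k. if k \<in> I then b!(k-p) else c k)"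
    by (rule h\<chi>) (auto simp: n_def len)
  ultimately show ?thesis using ea[of a] ea[of b] by (simp add: I_def n_def)
qed

lemma tp_len_lt:
  assumes "length xs < length ys" shows "tp D F R xs C \<noteq> tp D F R ys C"
proof
  assume eq: "tp D F R xs C = tp D F R ys C"
  have "Eq (Var (length ys - 1)) (Var (length ys - 1)) \<in> tp D F R ys C" using assms by (auto simp: tp_def fmls_over_def holds_def)
  moreover have "Eq (Var (length ys - 1)) (Var (length ys - 1)) \<notin> tp D F R xs C" using assms by (auto simp: tp_def fmls_over_def)
  ultimately show False using eq by simp
qed

lemma tp_len: "tp D F R xs C = tp D F R ys C \<Longrightarrow> length xs = length ys"
  using tp_len_lt[of xs ys D F R C] tp_len_lt[of ys xs D F R C] by (metis linorder_neqE_nat)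

lemma mirror:
  assumes full: "full D F R M C" and MC: "M \<subseteq> C" and m0: "m0 \<in> M" and uD: "\<forall>k<N. u k \<in> D"
  obtains c where "\<forall>k. c k \<in> C"
    "\<forall>\<psi>. params \<psi> \<subseteq> M \<longrightarrow> fv \<psi> \<subseteq> {..<N} \<longrightarrow> (sat D F R \<psi> u = sat D F R \<psi> c)"
proof -
  define bs where "bs = map u [0..<N]"
  have lbs: "length bs = N" by (simp add: bs_def)
  have bsD: "set bs \<subseteq> D" using uD by (auto simp: bs_def)
  have "tp D F R bs M \<in> Sn D F R M N"
    unfolding Sn_def
  proof (intro CollectI conjI ballI)
    show "tp D F R bs M \<subseteq> fmls_over M N" by (auto simp: tp_def lbs)
  next
    fix \<phi> :: "('b,'c,'a) fml" assume "\<phi> \<in> fmls_over M N"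
    then show "\<phi> \<in> tp D F R bs M \<or> Neg \<phi> \<in> tp D F R bs M"
      by (auto simp: tp_def lbs fmls_over_def holds_Neg)
  next
    show "fin_sat_in_monster D F R N (tp D F R bs M)"
      unfolding fin_sat_in_monster_def using lbs bsD by (auto simp: tp_def)
  qed
  then obtain cs where cs: "length cs = N" "set cs \<subseteq> C" "tp D F R bs M \<subseteq> tp D F R cs M"
    using full unfolding full_def by blast
  define c where "c = (\<lambda>k. if k < N then cs!k else m0)"
  show ?thesis
  proof (rule that)
    show "\<forall>k. c k \<in> C" using cs m0 MC by (auto simp: c_def)
    show "\<forall>\<psi>. params \<psi> \<subseteq> M \<longrightarrow> fv \<psi> \<subseteq> {..<N} \<longrightarrow> (sat D F R \<psi> u = sat D F R \<psi> c)"
    proof (intro allI impI)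
      fix \<psi> :: "('b,'c,'a) fml" assume pm: "params \<psi> \<subseteq> M" and fvN: "fv \<psi> \<subseteq> {..<N}"
      have eu: "sat D F R \<psi> u = holds D F R \<psi> bs"
        unfolding holds_def by (rule sat_cong) (use fvN in \<open>auto simp: bs_def\<close>)
      have ec: "sat D F R \<psi> c = holds D F R \<psi> cs"
        unfolding holds_def by (rule sat_cong) (use fvN in \<open>auto simp: c_def\<close>)
      have f1: "\<psi> \<in> fmls_over M N" "Neg \<psi> \<in> fmls_over M N" using pm fvN by (auto simp: fmls_over_def)
      show "sat D F R \<psi> u = sat D F R \<psi> c"
      proof (cases "holds D F R \<psi> bs")
        case True
        then have "\<psi> \<in> tp D F R cs M" using cs(3) f1 by (auto simp: tp_def lbs)
        then show ?thesis using eu ec True by (simp add: tp_def)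
      next
        case False
        then have "Neg \<psi> \<in> tp D F R cs M" using cs(3) f1 by (auto simp: tp_def lbs holds_Neg)
        then show ?thesis using eu ec False by (simp add: tp_def holds_Neg)
      qed
    qed
  qed
qed




definition extl :: "'a list \<Rightarrow> (nat \<Rightarrow> 'a) \<Rightarrow> nat \<Rightarrow> 'a" where
  "extl xs e i = (if i < length xs then xs ! i else e i)"

lemma below_mono: "istar \<le> i \<Longrightarrow> below A istar \<subseteq> below A i"
  by (auto simp: below_def) (metis order_less_le_trans)

lemma concat_below:
  assumes "length is = length aa" "\<forall>k<length aa. set (aa!k) \<subseteq> A (is!k)" "\<forall>j\<in>set is. j < i"
  shows "set (concat aa) \<subseteq> below A i"
proof
  fix x assume "x \<in> set (concat aa)"
  then obtain y where "y \<in> set aa" "x \<in> set y" by auto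
  then obtain k where k: "k < length aa" "x \<in> set (aa!k)" by (auto simp: in_set_conv_nth)
  then have "x \<in> A (is!k)" using assms(2) by blast
  moreover have "is!k < i" using assms(1,3) k(1) nth_mem[of k "is"] by auto
  ultimately
  show "x \<in> below A i" by (auto simp: below_def)
qed

lemma concat_D:
  assumes "\<forall>k<length aa. set (aa!k) \<subseteq> A (is!k)" "\<forall>i. A i \<subseteq> D"
  shows "set (concat aa) \<subseteq> D"
proof
  fix x assume "x \<in> set (concat aa)"
  then obtain y where "y \<in> set aa" "x \<in> set y" by auto
  then obtain k where k: "k < length aa" "x \<in> set (aa!k)" by (auto simp: in_set_conv_nth)
  then show "x \<in> D" using assms by blast
qed

lemma below_D: "\<forall>i. A i \<subseteq> D \<Longrightarrow> below A i \<subseteq> D"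
  by (auto simp: below_def)

lemma side:
  assumes fs: "fs_sequence D F R M C A" and MC: "M \<subseteq> C"
    and blk: "\<forall>k<length aa'. set (aa'!k) \<subseteq> A (is'!k)" and lis: "length is' = length aa'"
    and lt: "\<forall>x\<in>set is'. x < i" and a: "set a \<subseteq> A i" and istar: "istar \<le> i"
    and eC: "\<forall>k. e k \<in> C \<union> below A istar" and pM: "params \<phi> \<subseteq> M"
    and cC: "\<forall>k. c k \<in> C"
    and tyeq: "\<forall>\<psi>. params \<psi> \<subseteq> M \<longrightarrow> fv \<psi> \<subseteq> fv \<phi> - {length (concat aa')..<length (concat aa') + length a}
        \<longrightarrow> sat D F R \<psi> (extl (concat aa' @ a) e) = sat D F R \<psi> c"
  shows "sat D F R \<phi> (extl (concat aa' @ a) e) = sat D F R \<phi>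
     (\<lambda>k. if k \<in> {length (concat aa')..<length (concat aa') + length a} then a!(k - length (concat aa')) else c k)"
proof -
  define L where "L = length (concat aa')"
  define I where "I = {L..<L + length a}"
  define u where "u = extl (concat aa' @ a) e"
  define ca where "ca = (\<lambda>k. if k \<in> I then a!(k - L) else c k)"
  have fsi: "fin_sat_in D F R (A i) (below A i \<union> C) M" using fs by (simp add: fs_sequence_def)
  have MB: "M \<subseteq> below A i \<union> C" using MC by auto
  have uI: "\<forall>k\<in>I. u k = a ! (k - L)" by (auto simp: u_def extl_def I_def L_def nth_append)
  have caI: "\<forall>k\<in>I. ca k = a ! (k - L)" by (auto simp: ca_def)
  have cb: "set (concat aa') \<subseteq> below A i" by (rule concat_below) (use blk lis lt in auto)
  have eB: "e k \<in> below A i \<union> C" for k using eC below_mono[OF istar, of A] by blast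
  have uB: "\<forall>k\<in>fv \<phi> - I. u k \<in> below A i \<union> C"
  proof
    fix k assume "k \<in> fv \<phi> - I"
    show "u k \<in> below A i \<union> C"
    proof (cases "k < L")
      case True
      then have "u k = concat aa' ! k" by (simp add: u_def extl_def L_def nth_append)
      then show ?thesis using True cb nth_mem[of k "concat aa'"] by (auto simp: L_def)
    next
      case False
      with \<open>k \<in> fv \<phi> - I\<close> have "u k = e k" by (auto simp: u_def extl_def L_def I_def)
      then show ?thesis using eB by simp
    qed
  qed
  have caB: "\<forall>k\<in>fv \<phi> - I. ca k \<in> below A i \<union> C" using cC by (auto simp: ca_def)
  have t1: "\<forall>\<psi>. params \<psi> \<subseteq> M \<longrightarrow> fv \<psi> \<subseteq> fv \<phi> - I \<longrightarrow> sat D F R \<psi> u = sat D F R \<psi> ca"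
  proof (intro allI impI)
    fix \<psi> :: "('b,'c,'a) fml" assume "params \<psi> \<subseteq> M" "fv \<psi> \<subseteq> fv \<phi> - I"
    then have "sat D F R \<psi> u = sat D F R \<psi> c" using tyeq by (simp add: u_def I_def L_def)
    also have "\<dots> = sat D F R \<psi> ca" by (rule sat_cong) (use \<open>fv \<psi> \<subseteq> fv \<phi> - I\<close> in \<open>auto simp: ca_def\<close>)
    finally show "sat D F R \<psi> u = sat D F R \<psi> ca" .
  qed
  have "sat D F R \<phi> u = sat D F R \<phi> ca"
  proof (rule ccontr)
    assume ne: "sat D F R \<phi> u \<noteq> sat D F R \<phi> ca"
    show False
    proof (cases "sat D F R \<phi> u")
      case True
      show False
        by (rule fs_core[OF fsi a MB pM, of L u ca])
           (use uI caI uB caB t1 True ne in \<open>simp_all add: I_def\<close>)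
    next
      case False
      show False
        by (rule fs_core[OF fsi a MB pM, of L ca u])
           (use uI caI uB caB t1 False ne in \<open>simp_all add: I_def\<close>)
    qed
  qed
  then show ?thesis unfolding u_def ca_def I_def L_def .
qed




lemma mainQ:
  assumes full: "full D F R M C" and MC: "M \<subseteq> C" and CD: "C \<subseteq> D" and m0: "m0 \<in> M"
    and AD: "\<forall>i. A i \<subseteq> D" and fs: "fs_sequence D F R M C A"
  shows "length is = n \<Longrightarrow> sorted_wrt (<) is \<Longrightarrow> length aa = n \<Longrightarrow> length bb = n \<Longrightarrow> length js = n \<Longrightarrow>
     (\<forall>i\<in>set is. istar \<le> i) \<Longrightarrow> (\<forall>j\<in>set js. istar \<le> j) \<Longrightarrow> sorted_wrt (<) js \<Longrightarrow>
     (\<forall>k<n. set (aa!k) \<subseteq> A (is!k) \<and> set (bb!k) \<subseteq> A (js!k) \<and> tp D F R (aa!k) C = tp D F R (bb!k) C) \<Longrightarrow>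
     params \<phi> \<subseteq> M \<Longrightarrow> (\<forall>k. e k \<in> C \<union> below A istar) \<Longrightarrow>
     sat D F R \<phi> (extl (concat aa) e) = sat D F R \<phi> (extl (concat bb) e)"
proof (induction n arbitrary: "is" js aa bb \<phi> e)
  case 0 then show ?case by simp
next
  case (Suc n)
  obtain is' i where is_eq: "is = is' @ [i]" using Suc.prems(1) by (cases "is" rule: rev_cases) auto
  obtain js' j where js_eq: "js = js' @ [j]" using Suc.prems(5) by (cases js rule: rev_cases) auto
  obtain aa' a where aa_eq: "aa = aa' @ [a]" using Suc.prems(3) by (cases aa rule: rev_cases) auto
  obtain bb' b where bb_eq: "bb = bb' @ [b]" using Suc.prems(4) by (cases bb rule: rev_cases) auto
  have lens: "length is' = n" "length js' = n" "length aa' = n" "length bb' = n"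
    using Suc.prems(1,3,4,5) is_eq js_eq aa_eq bb_eq by auto
  have sis: "sorted_wrt (<) is'" "\<forall>x\<in>set is'. x < i"
    using Suc.prems(2) is_eq by (auto simp: sorted_wrt_append)
  have sjs: "sorted_wrt (<) js'" "\<forall>x\<in>set js'. x < j"
    using Suc.prems(8) js_eq by (auto simp: sorted_wrt_append)
  have st: "\<forall>x\<in>set is'. istar \<le> x" "istar \<le> i" "\<forall>x\<in>set js'. istar \<le> x" "istar \<le> j"
    using Suc.prems(6,7) is_eq js_eq by auto
  have blk: "\<forall>k<n. set (aa'!k) \<subseteq> A (is'!k) \<and> set (bb'!k) \<subseteq> A (js'!k) \<and> tp D F R (aa'!k) C = tp D F R (bb'!k) C"
  proof (intro allI impI)
    fix k assume k: "k < n"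
    have h: "set (aa!k) \<subseteq> A (is!k) \<and> set (bb!k) \<subseteq> A (js!k) \<and> tp D F R (aa!k) C = tp D F R (bb!k) C"
      using Suc.prems(9) k by auto
    moreover have "aa!k = aa'!k" "bb!k = bb'!k" "is!k = is'!k" "js!k = js'!k"
      using k lens is_eq js_eq aa_eq bb_eq by (simp_all add: nth_append)
    ultimately show "set (aa'!k) \<subseteq> A (is'!k) \<and> set (bb'!k) \<subseteq> A (js'!k) \<and> tp D F R (aa'!k) C = tp D F R (bb'!k) C"
      by simp
  qed
  have lastb: "set a \<subseteq> A i" "set b \<subseteq> A j" "tp D F R a C = tp D F R b C"
  proof -
    have h: "set (aa!n) \<subseteq> A (is!n) \<and> set (bb!n) \<subseteq> A (js!n) \<and> tp D F R (aa!n) C = tp D F R (bb!n) C"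
      using Suc.prems(9) by auto
    moreover have "aa!n = a" "bb!n = b" "is!n = i" "js!n = j"
      using lens is_eq js_eq aa_eq bb_eq by (simp_all add: nth_append)
    ultimately show "set a \<subseteq> A i" "set b \<subseteq> A j" "tp D F R a C = tp D F R b C" by simp_all
  qed
  have lab: "length b = length a" using tp_len[OF lastb(3)] by simp
  have IH: "sat D F R \<psi> (extl (concat aa') E) = sat D F R \<psi> (extl (concat bb') E)"
    if "params \<psi> \<subseteq> M" "\<forall>k. E k \<in> C \<union> below A istar" for \<psi> E
    by (rule Suc.IH[of is' aa' bb' js' \<psi> E]) (use lens sis sjs st blk that in auto)
  have mlen: "map length aa' = map length bb'"
  proof (rule nth_equalityI)
    show "length (map length aa') = length (map length bb')" using lens by simp
    fix k assume "k < length (map length aa')"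
    then have "k < n" using lens by simp
    then have "tp D F R (aa'!k) C = tp D F R (bb'!k) C" using blk by blast
    then have "length (aa'!k) = length (bb'!k)" by (rule tp_len)
    then show "map length aa' ! k = map length bb' ! k" using \<open>k < n\<close> lens by simp
  qed
  define L where "L = length (concat aa')"
  have LB: "length (concat bb') = L" using mlen by (simp add: L_def length_concat)
  define la where "la = length a"
  define I where "I = {L..<L+la}"
  define u where "u = extl (concat aa' @ a) e"
  define v where "v = extl (concat bb' @ b) e"
  obtain N where N: "fv \<phi> \<subseteq> {..<N}" using finite_fv[of \<phi>] finite_nat_set_iff_bounded by auto
  have eD: "e k \<in> D" for k using Suc.prems(11) CD below_D[OF AD, of istar] by blast
  have uD: "\<forall>k<N. u k \<in> D"
  proof (intro allI impI)
    fix k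
    have "set (concat aa) \<subseteq> D" by (rule concat_D[of aa A "is"]) (use Suc.prems(9,3) AD in auto)
    then show "u k \<in> D" using eD nth_mem[of k "concat aa"] by (auto simp: u_def extl_def aa_eq)
  qed
  obtain c where cC: "\<forall>k. c k \<in> C"
    and cty: "\<forall>\<psi>. params \<psi> \<subseteq> M \<longrightarrow> fv \<psi> \<subseteq> {..<N} \<longrightarrow> (sat D F R \<psi> u = sat D F R \<psi> c)"
    using mirror[OF full MC m0 uD] by blast
  have T: "sat D F R \<psi> u = sat D F R \<psi> v" if "params \<psi> \<subseteq> M" "fv \<psi> \<subseteq> fv \<phi> - I" for \<psi>
  proof -
    define E where "E = (\<lambda>k. if k < L + la then m0 else e k)"
    have EC: "\<forall>k. E k \<in> C \<union> below A istar" using m0 MC Suc.prems(11) by (auto simp: E_def)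
    have "sat D F R \<psi> u = sat D F R \<psi> (extl (concat aa') E)"
      by (rule sat_cong) (use that in \<open>auto simp: u_def extl_def E_def L_def I_def la_def nth_append\<close>)
    also have "\<dots> = sat D F R \<psi> (extl (concat bb') E)" by (rule IH[OF that(1) EC])
    also have "\<dots> = sat D F R \<psi> v"
      by (rule sat_cong) (use that LB lab in \<open>auto simp: v_def extl_def E_def L_def I_def la_def nth_append\<close>)
    finally show ?thesis .
  qed
  have pM: "params \<phi> \<subseteq> M" by (rule Suc.prems(10))
  have cty': "\<forall>\<psi>. params \<psi> \<subseteq> M \<longrightarrow> fv \<psi> \<subseteq> fv \<phi> - X \<longrightarrow> sat D F R \<psi> u = sat D F R \<psi> c" for X
  proof (intro allI impI)
    fix \<psi> :: "('b,'c,'a) fml" assume "params \<psi> \<subseteq> M" "fv \<psi> \<subseteq> fv \<phi> - X"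
    moreover then have "fv \<psi> \<subseteq> {..<N}" using N by blast
    ultimately show "sat D F R \<psi> u = sat D F R \<psi> c" using cty by blast
  qed
  have s1: "sat D F R \<phi> u = sat D F R \<phi> (\<lambda>k. if k \<in> {L..<L + length a} then a!(k - L) else c k)"
    unfolding u_def L_def
    by (rule side[OF fs MC _ _ sis(2) lastb(1) st(2) Suc.prems(11) pM cC])
       (use lens blk cty'[unfolded u_def] in auto)
  have s2: "sat D F R \<phi> v = sat D F R \<phi> (\<lambda>k. if k \<in> {L..<L + length a} then b!(k - L) else c k)"
  proof -
    have tyb: "\<forall>\<psi>. params \<psi> \<subseteq> M \<longrightarrow> fv \<psi> \<subseteq> fv \<phi> - {length (concat bb')..<length (concat bb') + length b}
        \<longrightarrow> sat D F R \<psi> (extl (concat bb' @ b) e) = sat D F R \<psi> c"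
      using T cty' by (auto simp: v_def LB lab I_def la_def)
    have "sat D F R \<phi> v = sat D F R \<phi> (\<lambda>k. if k \<in> {length (concat bb')..<length (concat bb') + length b} then b!(k - length (concat bb')) else c k)"
      unfolding v_def
      by (rule side[OF fs MC _ _ sjs(2) lastb(2) st(4) Suc.prems(11) pM cC tyb])
         (use lens blk in auto)
    then show ?thesis by (simp only: LB lab)
  qed
  have s3: "sat D F R \<phi> (\<lambda>k. if k \<in> {L..<L + length a} then a!(k - L) else c k)
          = sat D F R \<phi> (\<lambda>k. if k \<in> {L..<L + length a} then b!(k - L) else c k)"
    by (rule tp_core[OF lastb(3) lab]) (use pM MC cC in auto)
  show ?case using s1 s2 s3 by (simp add: u_def v_def aa_eq bb_eq)
qed




theorem proposition2:
  fixes D :: "'a set" and F :: "'f \<Rightarrow> 'a list \<Rightarrow> 'a" and R :: "'r \<Rightarrow> 'a list \<Rightarrow> bool"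
    and K :: "'k set" and M C :: "'a set" and A :: "'i::linorder \<Rightarrow> 'a set"
  assumes "is_structure D F"
    and "saturated D F R K"
    and "elem_sub M D F R"
    and "(card_of M, card_of K) \<in> ordLess"
    and "M \<subseteq> C" and "C \<subseteq> D"
    and "full D F R M C"
    and "\<forall>i. A i \<subseteq> D"
    and "fs_sequence D F R M C A"
  shows "order_congruence D F R C A"
proof -
  have MC: "M \<subseteq> C" and CD: "C \<subseteq> D" and full: "full D F R M C" and AD: "\<forall>i. A i \<subseteq> D"
    and fs: "fs_sequence D F R M C A" using assms by auto
  have "M \<noteq> {}" using assms(3) by (simp add: elem_sub_def is_structure_def)
  then obtain m0 where m0: "m0 \<in> M" by blast
  show ?thesis
    unfolding order_congruence_def
  proof (intro allI impI)
    fix istar :: 'i and "is" js :: "'i list" and aa bb :: "'a list list"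
    assume H: "sorted_wrt (<) is \<and> sorted_wrt (<) js \<and>
        length js = length is \<and> length aa = length is \<and> length bb = length is \<and>
        (\<forall>i\<in>set is. istar \<le> i) \<and> (\<forall>j\<in>set js. istar \<le> j) \<and>
        (\<forall>k<length is. set (aa ! k) \<subseteq> A (is ! k) \<and> set (bb ! k) \<subseteq> A (js ! k) \<and>
                        tp D F R (aa ! k) C = tp D F R (bb ! k) C)"
    then have H1: "sorted_wrt (<) is" "sorted_wrt (<) js" "length js = length is"
      "length aa = length is" "length bb = length is" "\<forall>i\<in>set is. istar \<le> i" "\<forall>j\<in>set js. istar \<le> j"
      "\<forall>k<length is. set (aa ! k) \<subseteq> A (is ! k) \<and> set (bb ! k) \<subseteq> A (js ! k) \<and>
                        tp D F R (aa ! k) C = tp D F R (bb ! k) C" by auto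
    define X where "X = C \<union> below A istar"
    define L where "L = length (concat aa)"
    have mlen: "map length aa = map length bb"
    proof (rule nth_equalityI)
      show "length (map length aa) = length (map length bb)" using H1 by simp
      fix k assume "k < length (map length aa)"
      then have k: "k < length is" using H1 by simp
      then have "tp D F R (aa!k) C = tp D F R (bb!k) C" using H1(8) by blast
      then have "length (aa!k) = length (bb!k)" by (rule tp_len)
      then show "map length aa ! k = map length bb ! k" using k H1 by simp
    qed
    have LB: "length (concat bb) = L" using mlen by (simp add: L_def length_concat)
    have key: "holds D F R \<phi> (concat aa) = holds D F R \<phi> (concat bb)" if fo: "\<phi> \<in> fmls_over X L" for \<phi>
    proof -
      define P where "P = params \<phi>"
      have PX: "P \<subseteq> X" using fo by (simp add: fmls_over_def P_def)
      have fvL: "fv \<phi> \<subseteq> {..<L}" using fo by (simp add: fmls_over_def)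
      obtain ps where ps: "set ps = P" "distinct ps"
        using finite_distinct_list[OF finite_params[of \<phi>]] by (auto simp: P_def)
      obtain Nb where Nb: "\<forall>n\<in>bvars \<phi>. n < Nb"
        using finite_bvars[of \<phi>] finite_nat_set_iff_bounded by auto
      define N' where "N' = Nb + L"
      define h where "h = (\<lambda>x. N' + (THE k. k < length ps \<and> ps!k = x))"
      define E where "E = (\<lambda>k. if N' \<le> k \<and> k < N' + length ps then ps!(k-N') else m0)"
      have hx: "N' \<le> h x \<and> h x < N' + length ps \<and> ps!(h x - N') = x" if "x \<in> P" for x
      proof -
        have "\<exists>!k. k < length ps \<and> ps!k = x" using distinct_Ex1[OF ps(2)] that ps(1) by auto
        then have "(THE k. k < length ps \<and> ps!k = x) < length ps \<and> ps!(THE k. k < length ps \<and> ps!k = x) = x"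
          by (rule theI')
        then show ?thesis by (simp add: h_def)
      qed
      have EX: "\<forall>k. E k \<in> C \<union> below A istar"
      proof
        fix k
        show "E k \<in> C \<union> below A istar"
        proof (cases "N' \<le> k \<and> k < N' + length ps")
          case True
          then have "ps!(k-N') \<in> set ps" by auto
          then show ?thesis using True PX ps(1) by (auto simp: E_def X_def)
        qed (use m0 MC in \<open>auto simp: E_def\<close>)
      qed
      have conv: "holds D F R \<phi> zs = sat D F R (pabs h P \<phi>) (extl zs E)" if "length zs = L" for zs
      proof -
        have "holds D F R \<phi> zs = sat D F R \<phi> (extl zs E)"
          unfolding holds_def by (rule sat_cong) (use fvL that in \<open>auto simp: extl_def\<close>)
        also have "\<dots> = sat D F R (pabs h P \<phi>) (extl zs E)"
        proof (rule sat_pabs[symmetric])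
          show "\<forall>a\<in>P. extl zs E (h a) = a"
          proof
            fix x assume "x \<in> P"
            from hx[OF this] show "extl zs E (h x) = x" using that by (auto simp: extl_def E_def N'_def)
          qed
          show "\<forall>a\<in>P. h a \<notin> bvars \<phi>"
          proof
            fix x assume "x \<in> P"
            from hx[OF this] show "h x \<notin> bvars \<phi>" using Nb by (auto simp: N'_def)
          qed
        qed
        finally show ?thesis .
      qed
      have pP: "params (pabs h P \<phi>) \<subseteq> M" by (simp add: params_pabs P_def)
      have "sat D F R (pabs h P \<phi>) (extl (concat aa) E) = sat D F R (pabs h P \<phi>) (extl (concat bb) E)"
        by (rule mainQ[OF full MC CD m0 AD fs, of "is" "length is" aa bb js istar])
           (use H1 pP EX in auto)
      then show ?thesis using conv[of "concat aa"] conv[of "concat bb"] LB by (simp add: L_def)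
    qed
    show "tp D F R (concat aa) (C \<union> below A istar) = tp D F R (concat bb) (C \<union> below A istar)"
    proof (rule set_eqI)
      fix \<phi>
      show "\<phi> \<in> tp D F R (concat aa) (C \<union> below A istar) \<longleftrightarrow> \<phi> \<in> tp D F R (concat bb) (C \<union> below A istar)"
        using key[of \<phi>] LB by (auto simp: tp_def X_def L_def)
    qed
  qed
qed


end
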